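(* For every $k\geq 1$, $\mathcal{L}_{\mathsf{SAFA}(|H|=k)}\subsetneq\mathcal{L}_{\mathsf{SAFA}(|H|=k+1)}$, where $\mathcal{L}_{\mathsf{SAFA}(|H|=j)}$ denotes the class of data languages accepted by SAFA $M=(Q,\Sigma\times D,q_0,F,H,\delta)$ with exactly $|H|=j$ sets.
   Context: $D$ is a fixed countably infinite set of data values; for a finite alphabet $\Sigma$, a data language is a subset of $(\Sigma\times D)^*$. A set augmented finite automaton (SAFA) is a tuple $M=(Q,\Sigma\times D,q_0,F,H,\delta)$: $Q$ finite set of states, $q_0\in Q$ initial, $F\subseteq Q$ final, $H=\{h_1,\dots,h_m\}$ a finite collection of (names of) sets of data values, $\delta\subseteq Q\times\Sigma\times C\times OP\times Q$ with $C=\{p(h_i),\,!p(h_i): h_i\in H\}$, $OP=\{-\}\cup\{\mathsf{ins}(h_i):h_i\in H\}$. Configurations are $(q,\langle S_1,\dots,S_m\rangle)$ with $S_i\subseteq D$ finite; initially state $q_0$ and all sets empty. On reading $(a,d)$, a transition $(q,a,\alpha,op,q')$ from the current state may be taken if $\alpha=p(h_i)$ and $d\in S_i$, or $\alpha=\,!p(h_i)$ and $d\notin S_i$; then the state becomes $q'$ and if $op=\mathsf{ins}(h_j)$ the value $d$ is added to $S_j$ ($op=-$ changes nothing). A word is accepted if some run reads it entirely and ends in $F$. *)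

theory Defs
  imports Main "HOL-Library.Countable"
begin

text \<open>States are natural numbers drawn from a
finite set; the sets of H are indexed by 0..<nsets.\<close>

datatype cond = Mem nat | NotMem nat
datatype oper = NoOp | Ins nat

record 'a safa =
  states :: "nat set"
  init   :: nat
  final  :: "nat set"
  nsets  :: nat
  trans  :: "(nat \<times> 'a \<times> cond \<times> oper \<times> nat) set"

fun cond_idx :: "cond \<Rightarrow> nat" where
  "cond_idx (Mem i) = i" | "cond_idx (NotMem i) = i"

fun oper_ok :: "nat \<Rightarrow> oper \<Rightarrow> bool" where
  "oper_ok m NoOp = True" | "oper_ok m (Ins i) = (i < m)"

definition wf_safa :: "'a safa \<Rightarrow> bool" where
  "wf_safa M \<longleftrightarrow> finite (states M) \<and> init M \<in> states M \<and> final M \<subseteq> states M \<and>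
     (\<forall>(q,a,c,op,q') \<in> trans M. q \<in> states M \<and> q' \<in> states M \<and>
         cond_idx c < nsets M \<and> oper_ok (nsets M) op)"

type_synonym 'd config = "nat \<times> (nat \<Rightarrow> 'd set)"

fun sat :: "cond \<Rightarrow> 'd \<Rightarrow> (nat \<Rightarrow> 'd set) \<Rightarrow> bool" where
  "sat (Mem i) d S = (d \<in> S i)"
| "sat (NotMem i) d S = (d \<notin> S i)"

fun apply_op :: "oper \<Rightarrow> 'd \<Rightarrow> (nat \<Rightarrow> 'd set) \<Rightarrow> (nat \<Rightarrow> 'd set)" where
  "apply_op NoOp d S = S"
| "apply_op (Ins j) d S = S(j := insert d (S j))"

definition step :: "'a safa \<Rightarrow> 'd config \<Rightarrow> 'a \<times> 'd \<Rightarrow> 'd config \<Rightarrow> bool" where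
  "step M c x c' \<longleftrightarrow> (\<exists>c0 op. (fst c, fst x, c0, op, fst c') \<in> trans M \<and>
       sat c0 (snd x) (snd c) \<and> snd c' = apply_op op (snd x) (snd c))"

definition reach :: "'a safa \<Rightarrow> ('a \<times> 'd) list \<Rightarrow> 'd config set" where
  "reach M w = foldl (\<lambda>C x. {c'. \<exists>c\<in>C. step M c x c'}) {(init M, \<lambda>_. {})} w"

definition lang :: "'a safa \<Rightarrow> ('a \<times> 'd) list set" where
  "lang M = {w. \<exists>c \<in> reach M w. fst c \<in> final M}"

definition SAFA_langs :: "nat \<Rightarrow> ('a \<times> 'd) list set set" where
  "SAFA_langs k = {L. \<exists>M :: 'a safa. wf_safa M \<and> nsets M = k \<and> L = lang M}"

end

theory Submission
  imports Defs
begin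

definition cnt :: "('a \<times> 'd) list \<Rightarrow> 'd \<Rightarrow> nat" where
  "cnt w d = length (filter (\<lambda>x. snd x = d) w)"

definition Lk :: "nat \<Rightarrow> ('a \<times> 'd) list set" where
  "Lk K = {w. \<forall>d. cnt w d \<le> K}"

lemma cnt_snoc: "cnt (w @ [x]) d = cnt w d + (if snd x = d then 1 else 0)"
  by (simp add: cnt_def)

lemma reach_Nil: "reach M [] = {(init M, \<lambda>_. {})}"
  by (simp add: reach_def)

lemma reach_snoc: "reach M (w @ [x]) = {c'. \<exists>c\<in>reach M w. step M c x c'}"
  by (simp add: reach_def)

lemma reach_run:
  "c \<in> reach M w \<longleftrightarrow> (\<exists>cf. cf 0 = (init M, \<lambda>_. {}) \<and>
      (\<forall>t<length w. step M (cf t) (w!t) (cf (Suc t))) \<and> cf (length w) = c)"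
proof (induction w arbitrary: c rule: rev_induct)
  case Nil
  then show ?case by (auto simp: reach_Nil)
next
  case (snoc x w)
  show ?case
  proof
    assume "c \<in> reach M (w @ [x])"
    then obtain c0 where c0: "c0 \<in> reach M w" "step M c0 x c" by (auto simp: reach_snoc)
    then obtain cf where cf: "cf 0 = (init M, \<lambda>_. {})"
      "\<forall>t<length w. step M (cf t) (w!t) (cf (Suc t))" "cf (length w) = c0"
      using snoc.IH by blast
    define cf' where "cf' = cf(Suc (length w) := c)"
    have "\<forall>t<length (w@[x]). step M (cf' t) ((w@[x])!t) (cf' (Suc t))"
    proof (intro allI impI)
      fix t assume "t < length (w@[x])"
      then have "t < length w \<or> t = length w" by auto
      then show "step M (cf' t) ((w@[x])!t) (cf' (Suc t))"
        using cf c0 by (auto simp: cf'_def nth_append)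
    qed
    then show "\<exists>cf. cf 0 = (init M, \<lambda>_. {}) \<and>
      (\<forall>t<length (w@[x]). step M (cf t) ((w@[x])!t) (cf (Suc t))) \<and> cf (length (w@[x])) = c"
      using cf by (auto simp: cf'_def intro!: exI[of _ cf'])
  next
    assume "\<exists>cf. cf 0 = (init M, \<lambda>_. {}) \<and>
      (\<forall>t<length (w@[x]). step M (cf t) ((w@[x])!t) (cf (Suc t))) \<and> cf (length (w@[x])) = c"
    then obtain cf where cf: "cf 0 = (init M, \<lambda>_. {})"
      "\<forall>t<length (w@[x]). step M (cf t) ((w@[x])!t) (cf (Suc t))" "cf (length (w@[x])) = c"
      by blast
    have "\<forall>t<length w. step M (cf t) (w!t) (cf (Suc t))"
    proof (intro allI impI)
      fix t assume "t < length w"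
      then have "step M (cf t) ((w@[x])!t) (cf (Suc t))" using cf(2) by simp
      then show "step M (cf t) (w!t) (cf (Suc t))" using \<open>t < length w\<close> by (simp add: nth_append)
    qed
    then have "cf (length w) \<in> reach M w" using snoc.IH cf(1) by blast
    moreover have "step M (cf (length w)) x c" using cf(2,3) by (metis length_append_singleton lessI nth_append_length)
    ultimately show "c \<in> reach M (w @ [x])" by (auto simp: reach_snoc)
  qed
qed

subsection \<open>Inclusion\<close>

lemma lang_nsets: "lang (M\<lparr>nsets := n\<rparr>) = lang M"
proof -
  show ?thesis by (simp add: lang_def reach_def step_def)
qed

lemma oper_ok_mono: "oper_ok m op \<Longrightarrow> m \<le> n \<Longrightarrow> oper_ok n op"
  by (cases op) auto

lemma incl: "SAFA_langs k \<subseteq> SAFA_langs (k + 1)"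
proof
  fix L assume "L \<in> SAFA_langs k"
  then obtain M where M: "wf_safa M" "nsets M = k" "L = lang M" by (auto simp: SAFA_langs_def)
  have "wf_safa (M\<lparr>nsets := k+1\<rparr>)"
    using M(1,2) unfolding wf_safa_def by (fastforce intro: oper_ok_mono)
  moreover have "L = lang (M\<lparr>nsets := k+1\<rparr>)" by (simp only: M(3) lang_nsets)
  moreover have "nsets (M\<lparr>nsets := k+1\<rparr>) = k+1" by simp
  ultimately show "L \<in> SAFA_langs (k+1)"
    unfolding SAFA_langs_def by blast
qed

definition Mk :: "nat \<Rightarrow> 'a safa" where
  "Mk K = \<lparr>states = {0}, init = 0, final = {0}, nsets = K,
     trans = {(0, a, NotMem l, Ins l, 0) | a l. l < K}\<rparr>"

lemma Mk_wf: "wf_safa (Mk K)"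
  by (auto simp: wf_safa_def Mk_def)

lemma Mk_inv:
  "c \<in> reach (Mk K) w \<Longrightarrow> fst c = 0 \<and> (\<forall>d. {l. d \<in> snd c l} \<subseteq> {..<K} \<and> card {l. d \<in> snd c l} = cnt w d)"
proof (induction w arbitrary: c rule: rev_induct)
  case Nil
  then show ?case by (auto simp: reach_Nil Mk_def cnt_def)
next
  case (snoc x w)
  then obtain c0 where c0: "c0 \<in> reach (Mk K) w" "step (Mk K) c0 x c" by (auto simp: reach_snoc)
  from c0(2) obtain a l where tr: "fst c0 = 0" "fst c = 0" "l < K" "snd x \<notin> snd c0 l"
     "snd c = (snd c0)(l := insert (snd x) (snd c0 l))"
    by (auto simp: step_def Mk_def)
  have IH: "\<forall>d. {l. d \<in> snd c0 l} \<subseteq> {..<K} \<and> card {l. d \<in> snd c0 l} = cnt w d"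
    using snoc.IH c0(1) by blast
  show ?case
  proof (intro conjI allI)
    show "fst c = 0" by fact
  next
    fix d
    show "{l. d \<in> snd c l} \<subseteq> {..<K}" using IH tr by auto
  next
    fix d
    show "card {l. d \<in> snd c l} = cnt (w @ [x]) d"
    proof (cases "d = snd x")
      case True
      then have "{l'. d \<in> snd c l'} = insert l {l'. d \<in> snd c0 l'}" using tr by auto
      moreover have "finite {l'. d \<in> snd c0 l'}" using IH by (meson finite_lessThan finite_subset)
      moreover have "l \<notin> {l'. d \<in> snd c0 l'}" using tr True by auto
      ultimately show ?thesis using IH True by (simp add: cnt_snoc)
    next
      case False
      then have "{l'. d \<in> snd c l'} = {l'. d \<in> snd c0 l'}" using tr by auto
      then show ?thesis using IH False by (simp add: cnt_snoc)
    qed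
  qed
qed

lemma Mk_ne: "(\<forall>d. cnt w d \<le> K) \<Longrightarrow> reach (Mk K) w \<noteq> {}"
proof (induction w rule: rev_induct)
  case Nil
  then show ?case by (simp add: reach_Nil)
next
  case (snoc x w)
  have "\<forall>d. cnt w d \<le> K"
  proof
    fix d
    have "cnt w d \<le> cnt (w @ [x]) d" by (simp add: cnt_snoc)
    then show "cnt w d \<le> K" using snoc.prems[rule_format, of d] by linarith
  qed
  then obtain c where c: "c \<in> reach (Mk K) w" using snoc.IH by blast
  let ?d = "snd x"
  have inv: "fst c = 0" "{l. ?d \<in> snd c l} \<subseteq> {..<K}" "card {l. ?d \<in> snd c l} = cnt w ?d"
    using Mk_inv[OF c] by auto
  have "cnt w ?d < K" using snoc.prems[rule_format, of ?d] by (simp add: cnt_snoc)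
  then have "\<not> {..<K} \<subseteq> {l. ?d \<in> snd c l}"
  proof (intro notI)
    assume "{..<K} \<subseteq> {l. ?d \<in> snd c l}"
    then have "{l. ?d \<in> snd c l} = {..<K}" using inv(2) by blast
    then show False using inv(3) \<open>cnt w ?d < K\<close> by simp
  qed
  then obtain l where l: "l < K" "?d \<notin> snd c l" by auto
  have "(fst c, fst x, NotMem l, Ins l, 0) \<in> trans (Mk K)"
    using l inv(1) by (simp add: Mk_def)
  then have "step (Mk K) c x (0, (snd c)(l := insert ?d (snd c l)))"
    unfolding step_def using l by fastforce
  then show ?case using c by (auto simp: reach_snoc)
qed

lemma Mk_lang: "lang (Mk K) = Lk K"
proof (intro set_eqI iffI)
  fix w assume "w \<in> lang (Mk K)"
  then obtain c where "c \<in> reach (Mk K) w" by (auto simp: lang_def)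
  from Mk_inv[OF this] have "\<forall>d. card {l. d \<in> snd c l} = cnt w d \<and> {l. d \<in> snd c l} \<subseteq> {..<K}" by auto
  then have "\<forall>d. cnt w d \<le> K" by (metis card_lessThan card_mono finite_lessThan)
  then show "w \<in> Lk K" by (simp add: Lk_def)
next
  fix w assume "w \<in> Lk K"
  then obtain c where c: "c \<in> reach (Mk K) w" using Mk_ne by (fastforce simp: Lk_def)
  then have "fst c = 0" using Mk_inv by blast
  then show "w \<in> lang (Mk K)" using c by (auto simp: lang_def Mk_def)
qed

subsection \<open>Impossibility with k sets\<close>

lemma cnt_update:
  "p < length xs \<Longrightarrow> snd (xs!p) \<noteq> d \<Longrightarrow> snd x = d \<Longrightarrow> cnt (xs[p := x]) d = cnt xs d + 1"
proof (induction xs arbitrary: p)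
  case Nil then show ?case by simp
next
  case (Cons y ys)
  then show ?case by (cases p) (auto simp: cnt_def)
qed

lemma cnt_concat_replicate: "cnt (concat (replicate n R)) d = n * cnt R d"
  by (induction n) (auto simp: cnt_def)

lemma length_concat_replicate: "length (concat (replicate n R)) = n * length R"
  by (induction n) auto

lemma nth_concat_replicate:
  "r < n \<Longrightarrow> j < length R \<Longrightarrow> concat (replicate n R) ! (r * length R + j) = R ! j"
proof (induction r arbitrary: n)
  case 0
  then obtain n' where "n = Suc n'" by (cases n) auto
  then show ?case using 0 by (simp add: nth_append)
next
  case (Suc r)
  then obtain n' where n: "n = Suc n'" by (cases n) auto
  have "concat (replicate n R) ! (Suc r * length R + j) = concat (replicate n' R) ! (r * length R + j)"
    using n by (simp add: nth_append add.assoc)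
  then show ?case using Suc n by simp
qed

lemma cnt_R_le:
  assumes "inj e"
  shows "cnt (map (\<lambda>i. (a0, e i)) [0..<N]) d \<le> 1"
proof -
  have "cnt (map (\<lambda>i. (a0, e i)) [0..<N]) d = length (filter (\<lambda>i. e i = d) [0..<N])"
    by (simp add: cnt_def filter_map o_def)
  also have "\<dots> = card (set (filter (\<lambda>i. e i = d) [0..<N]))"
    by (rule distinct_card[symmetric]) simp
  also have "\<dots> \<le> card {inv e d}"
  proof (rule card_mono)
    show "set (filter (\<lambda>i. e i = d) [0..<N]) \<subseteq> {inv e d}"
      using assms by (auto simp: inv_f_f[symmetric])
  qed simp
  finally show ?thesis by simp
qed

lemma cnt_R_eq:
  assumes "inj e" "i < N"
  shows "cnt (map (\<lambda>i. (a0, e i)) [0..<N]) (e i) = 1"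
proof -
  have "cnt (map (\<lambda>i. (a0, e i)) [0..<N]) (e i) = length (filter (\<lambda>j. e j = e i) [0..<N])"
    by (simp add: cnt_def filter_map o_def)
  also have "\<dots> = card (set (filter (\<lambda>j. e j = e i) [0..<N]))"
    by (rule distinct_card[symmetric]) simp
  also have "set (filter (\<lambda>j. e j = e i) [0..<N]) = {i}"
    using assms by (auto simp: inj_eq)
  finally show ?thesis by simp
qed

lemma step_replace:
  assumes "step M c (a, d) c'" "snd c' = snd c" "\<forall>l. d \<in> snd c l \<longleftrightarrow> d' \<in> snd c l"
  shows "step M c (a, d') c'"
proof -
  from assms(1) obtain c0 op where tr: "(fst c, a, c0, op, fst c') \<in> trans M"
    "sat c0 d (snd c)" "snd c' = apply_op op d (snd c)"
    by (auto simp: step_def)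
  have "sat c0 d' (snd c)" using tr(2) assms(3) by (cases c0) auto
  moreover have "snd c' = apply_op op d' (snd c)"
  proof (cases op)
    case NoOp then show ?thesis using tr by simp
  next
    case (Ins l)
    then have "snd c = (snd c)(l := insert d (snd c l))" using tr assms(2) by simp
    then have "d \<in> snd c l" by (metis fun_upd_same insertI1)
    then have "d' \<in> snd c l" using assms(3) by blast
    then show ?thesis using Ins assms(2) by (simp add: insert_absorb)
  qed
  ultimately show ?thesis using tr(1) by (auto simp: step_def)
qed

lemma chain_lemma:
  fixes f :: "nat \<Rightarrow> nat set"
  assumes "\<forall>r\<le>n. f r \<subseteq> f (Suc r)" "f 0 = {}" "\<forall>r\<le>Suc n. f r \<subseteq> {..<n}"
  shows "\<exists>r\<le>n. f r = f (Suc r)"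
proof (rule ccontr)
  assume "\<not> ?thesis"
  then have strict: "\<forall>r\<le>n. f r \<subset> f (Suc r)" using assms(1) by auto
  have fin: "finite (f r)" if "r \<le> Suc n" for r
    using assms(3) that by (meson finite_lessThan finite_subset)
  have "r \<le> card (f r)" if "r \<le> Suc n" for r
    using that
  proof (induction r)
    case 0 then show ?case by simp
  next
    case (Suc r)
    have "card (f r) < card (f (Suc r))"
      using strict Suc.prems fin[OF Suc.prems] by (simp add: psubset_card_mono)
    then show ?case using Suc by simp
  qed
  then have "Suc n \<le> card (f (Suc n))" by simp
  moreover have "card (f (Suc n)) \<le> n"
    using assms(3) by (metis card_lessThan card_mono finite_lessThan order_refl)
  ultimately show False by simp
qed

lemma not_k:
  fixes M :: "'a safa" and e :: "nat \<Rightarrow> 'd" and a0 :: 'a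
  assumes wf: "wf_safa M" and ns: "nsets M = k" and inj: "inj e" and L: "lang M = (Lk (Suc k) :: ('a \<times> 'd) list set)"
  shows False
proof -
  define N where "N = Suc k * 2^k + 1"
  define R where "R = map (\<lambda>i. (a0, e i)) [0..<N]"
  define w where "w = concat (replicate (Suc k) R)"
  have lenR: "length R = N" by (simp add: R_def)
  have lenw: "length w = Suc k * N" by (simp add: w_def length_concat_replicate lenR)
  have wnth: "w ! (r * N + j) = (a0, e j)" if "r \<le> k" "j < N" for r j
    using nth_concat_replicate[of r "Suc k" j R] that by (simp add: w_def lenR R_def)
  have "cnt w d \<le> Suc k" for d
  proof -
    have "cnt R d \<le> 1" using cnt_R_le[OF inj, of a0 N d] by (simp add: R_def)
    then have "Suc k * cnt R d \<le> Suc k * 1" by (rule mult_le_mono2)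
    then show ?thesis unfolding w_def cnt_concat_replicate by simp
  qed
  then have "w \<in> lang M" using L by (simp add: Lk_def)
  then obtain c where c: "c \<in> reach M w" "fst c \<in> final M" by (auto simp: lang_def)
  then obtain cf where cf: "cf 0 = (init M, \<lambda>_. {})"
      "\<forall>t<length w. step M (cf t) (w!t) (cf (Suc t))" "cf (length w) = c"
    using reach_run by blast
  define ty where "ty t d = {l. d \<in> snd (cf t) l}" for t d
  have stepD: "\<exists>op. oper_ok k op \<and> snd (cf (Suc t)) = apply_op op (snd (w!t)) (snd (cf t))"
    if "t < length w" for t
  proof -
    from cf(2) that obtain c0 op where
      "(fst (cf t), fst (w!t), c0, op, fst (cf (Suc t))) \<in> trans M"
      "snd (cf (Suc t)) = apply_op op (snd (w!t)) (snd (cf t))"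
      by (auto simp: step_def)
    moreover then have "oper_ok k op" using wf ns unfolding wf_safa_def by fastforce
    ultimately show ?thesis by blast
  qed
  have F1: "ty t d \<subseteq> ty (Suc t) d" if tl: "t < length w" for t d
  proof -
    obtain op where "snd (cf (Suc t)) = apply_op op (snd (w!t)) (snd (cf t))"
      using stepD[OF tl] by blast
    then show ?thesis by (cases op) (auto simp: ty_def)
  qed
  have F1': "ty t1 d \<subseteq> ty t2 d" if "t1 \<le> t2" "t2 \<le> length w" for t1 t2 d
    using that
  proof (induction t2 rule: dec_induct)
    case base then show ?case by simp
  next
    case (step m)
    then show ?case using F1[of m d] by auto
  qed
  have F2: "ty t d \<subseteq> {..<k}" if "t \<le> length w" for t d
    using that
  proof (induction t)
    case 0 then show ?case by (simp add: ty_def cf(1))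
  next
    case (Suc t)
    obtain op where op: "oper_ok k op" "snd (cf (Suc t)) = apply_op op (snd (w!t)) (snd (cf t))"
      using stepD Suc.prems by (metis Suc_le_lessD)
    then show ?case using Suc by (cases op) (auto simp: ty_def)
  qed
  have F4: "snd (cf (Suc t)) = snd (cf t)"
    if tl: "t < length w" "ty (Suc t) (snd (w!t)) = ty t (snd (w!t))" for t
  proof -
    obtain op where op: "snd (cf (Suc t)) = apply_op op (snd (w!t)) (snd (cf t))"
      using stepD[OF tl(1)] by blast
    show ?thesis
    proof (cases op)
      case NoOp then show ?thesis using op by simp
    next
      case (Ins l)
      then have "l \<in> ty (Suc t) (snd (w!t))" using op by (simp add: ty_def)
      then have "snd (w!t) \<in> snd (cf t) l" using tl(2) unfolding ty_def by blast
      then show ?thesis using op Ins by (simp add: insert_absorb)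
    qed
  qed
  define A where "A j r = ty (r * N) (e j)" for j r
  have chainA: "\<exists>r\<le>k. A j r = A j (Suc r)" for j
  proof (rule chain_lemma)
    show "\<forall>r\<le>k. A j r \<subseteq> A j (Suc r)"
      unfolding A_def using F1' lenw by simp
    show "A j 0 = {}" by (simp add: A_def ty_def cf(1))
    show "\<forall>r\<le>Suc k. A j r \<subseteq> {..<k}"
    proof (intro allI impI)
      fix r assume rk: "r \<le> Suc k"
      have "r * N \<le> length w" using mult_le_mono1[OF rk, of N] lenw by simp
      then show "A j r \<subseteq> {..<k}" unfolding A_def using F2 by blast
    qed
  qed
  define rr where "rr j = (SOME r. r \<le> k \<and> A j r = A j (Suc r))" for j
  have rr: "rr j \<le> k \<and> A j (rr j) = A j (Suc (rr j))" for j
    unfolding rr_def using chainA[of j] by (rule someI_ex)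
  define h where "h j = (rr j, A j (rr j))" for j
  have Asub: "A j r \<subseteq> {..<k}" if rk: "r \<le> Suc k" for j r
  proof -
    have "r * N \<le> length w" using mult_le_mono1[OF rk, of N] lenw by simp
    then show "A j r \<subseteq> {..<k}" unfolding A_def using F2 by blast
  qed
  have himg: "h ` {..<N} \<subseteq> {..k} \<times> Pow {..<k}"
  proof
    fix x assume "x \<in> h ` {..<N}"
    then obtain j where x: "x = h j" by blast
    have "rr j \<le> k" using rr by blast
    then show "x \<in> {..k} \<times> Pow {..<k}" using Asub[of "rr j" j] unfolding x h_def by simp
  qed
  have "\<not> inj_on h {..<N}"
  proof
    assume "inj_on h {..<N}"
    then have "N = card (h ` {..<N})" by (simp add: card_image)
    also have "\<dots> \<le> card ({..k} \<times> Pow {..<k})"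
      using himg by (intro card_mono) auto
    also have "\<dots> = Suc k * 2^k" by (simp add: card_cartesian_product card_Pow)
    finally show False by (simp add: N_def)
  qed
  then obtain i j where ij: "i < N" "j < N" "i \<noteq> j" "h i = h j"
    unfolding inj_on_def by auto
  define r where "r = rr j"
  have r: "r \<le> k" "rr i = r" "A i r = A j r" "A j r = A j (Suc r)" "A i r = A i (Suc r)"
    using ij(4) rr[of j] rr[of i] by (auto simp: h_def r_def)
  define p where "p = r * N + j"
  have pl: "Suc p \<le> Suc r * N" using ij(2) by (simp add: p_def)
  have le2: "Suc r * N \<le> length w" using mult_le_mono1[of "Suc r" "Suc k" N] r(1) lenw by simp
  have pw: "p < length w" using pl le2 by simp
  have wp: "w ! p = (a0, e j)" using wnth r(1) ij(2) by (simp add: p_def)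
  have tyj: "ty p (e j) = A j r" "ty (Suc p) (e j) = A j r"
  proof -
    have "A j r \<subseteq> ty p (e j)" unfolding A_def using F1'[of "r*N" p] le2 pl by (simp add: p_def)
    moreover have "ty p (e j) \<subseteq> ty (Suc p) (e j)" using F1[OF pw] .
    moreover have "ty (Suc p) (e j) \<subseteq> A j (Suc r)" unfolding A_def using F1' pl le2 by simp
    ultimately show "ty p (e j) = A j r" "ty (Suc p) (e j) = A j r" using r(4) by auto
  qed
  have tyi: "ty p (e i) = A i r"
  proof -
    have "A i r \<subseteq> ty p (e i)" unfolding A_def using F1'[of "r*N" p] le2 pl by (simp add: p_def)
    moreover have "ty p (e i) \<subseteq> A i (Suc r)" unfolding A_def using F1' pl le2 by simp
    ultimately show ?thesis using r(5) by auto
  qed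
  have same: "snd (cf (Suc p)) = snd (cf p)"
    using F4[OF pw] tyj wp by simp
  have memb: "\<forall>l. e j \<in> snd (cf p) l \<longleftrightarrow> e i \<in> snd (cf p) l"
    using tyj(1) tyi r(3) unfolding ty_def by blast
  define w' where "w' = w[p := (a0, e i)]"
  have "\<forall>t<length w'. step M (cf t) (w'!t) (cf (Suc t))"
  proof (intro allI impI)
    fix t assume t: "t < length w'"
    show "step M (cf t) (w'!t) (cf (Suc t))"
    proof (cases "t = p")
      case True
      have "step M (cf p) (w!p) (cf (Suc p))" using cf(2) pw by blast
      then have "step M (cf p) (a0, e j) (cf (Suc p))" by (simp only: wp)
      then have "step M (cf p) (a0, e i) (cf (Suc p))"
        by (rule step_replace[OF _ same memb])
      moreover have "w' ! p = (a0, e i)" using pw by (simp add: w'_def)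
      ultimately show ?thesis using True by simp
    next
      case False
      have tl: "t < length w" using t by (simp add: w'_def)
      have "w' ! t = w ! t" using False by (simp add: w'_def)
      moreover have "step M (cf t) (w!t) (cf (Suc t))" using cf(2) tl by blast
      ultimately show ?thesis by simp
    qed
  qed
  then have "cf (length w') \<in> reach M w'" using reach_run cf(1) by blast
  then have "w' \<in> lang M" using c cf(3) by (auto simp: lang_def w'_def)
  then have "cnt w' (e i) \<le> Suc k" using L by (simp add: Lk_def)
  moreover have "cnt w (e i) = Suc k"
  proof -
    have "cnt R (e i) = 1" using cnt_R_eq[OF inj ij(1), of a0] by (simp add: R_def)
    then show ?thesis unfolding w_def cnt_concat_replicate by simp
  qed
  moreover have "cnt w' (e i) = cnt w (e i) + 1"
    unfolding w'_def using pw wp ij(3) inj by (intro cnt_update) (auto simp: inj_eq)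
  ultimately show False by simp
qed

theorem corollary1:
  assumes "infinite (UNIV :: 'd::countable set)" and "k \<ge> 1"
  shows "(SAFA_langs k :: (('a::finite \<times> 'd) list set) set) \<subset> SAFA_langs (k + 1)"
proof -
  obtain e :: "nat \<Rightarrow> 'd" where inj: "inj e"
    using infinite_iff_countable_subset[THEN iffD1, OF assms(1)] by blast
  have "(Lk (Suc k) :: ('a \<times> 'd) list set) \<in> SAFA_langs (k + 1)"
  proof -
    have "nsets (Mk (Suc k) :: 'a safa) = k + 1" by (simp add: Mk_def)
    then show ?thesis
      unfolding SAFA_langs_def using Mk_wf[of "Suc k"] Mk_lang[of "Suc k"] by blast
  qed
  moreover have "(Lk (Suc k) :: ('a \<times> 'd) list set) \<notin> SAFA_langs k"
  proof
    assume "(Lk (Suc k) :: ('a \<times> 'd) list set) \<in> SAFA_langs k"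
    then have "\<exists>M::'a safa. wf_safa M \<and> nsets M = k \<and> (Lk (Suc k) :: ('a \<times> 'd) list set) = lang M"
      by (simp add: SAFA_langs_def)
    then obtain M :: "'a safa" where M: "wf_safa M" "nsets M = k" "(Lk (Suc k) :: ('a \<times> 'd) list set) = lang M"
      by blast
    show False using not_k[OF M(1,2) inj M(3)[symmetric]] .
  qed
  ultimately show ?thesis using incl[of k] by blast
qed

end
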